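(* Let $d\ge2$ and let $H_1,H_2$ be half-spaces in $\mathbb{Z}^d$, i.e. $H_i=\{y\in\mathbb{Z}^d:\langle y,v_i\rangle\ge b_i\}$ for unit vectors $v_i\in\mathbb{R}^d$ (not necessarily coordinate directions) and $b_i\in\mathbb{R}$. For simple random walk $(X_t)$ let $T_i$ be the first hitting time of $H_i$. If $x\in\mathbb{Z}^d\setminus(H_1\cup H_2)$ and $h_i=b_i-\langle x,v_i\rangle>0$ denotes the Euclidean distance from $x$ to the hyperplane bounding $H_i$, then \[ \mathbb{P}_x(T_1>T_2)\le\frac52\,\frac{h_1+1}{h_2}\Big(1+\frac{1}{2h_2}\Big)^2. \]
   Context: $\mathbb{P}_x$ denotes the law of simple random walk on $\mathbb{Z}^d$ started at $x$. *)

theory Defs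
  imports "HOL-Probability.Probability"
begin

text \<open>Lattice points of Z^d are int^'d (d = CARD('d)). The simple random walk is
  modelled on the path space of i.i.d. uniform steps in the set of the 2d unit
  vectors \<open>\<plusminus>e_i\<close>.\<close>

definition lat_to_real :: "int ^ 'd \<Rightarrow> real ^ 'd" where
  "lat_to_real y = (\<chi> i. real_of_int (y $ i))"

definition halfspace :: "real ^ 'd \<Rightarrow> real \<Rightarrow> (int ^ 'd) set" where
  "halfspace v b = {y. lat_to_real y \<bullet> v \<ge> b}"

definition srw_steps :: "(int ^ 'd::finite) set" where
  "srw_steps = {y. \<exists>i s. (s = 1 \<or> s = -1) \<and> y = (\<chi> j. if j = i then s else 0)}"

definition srw_step_pmf :: "(int ^ 'd::finite) pmf" where
  "srw_step_pmf = pmf_of_set srw_steps"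

definition srw_space :: "(int ^ 'd::finite) stream measure" where
  "srw_space = stream_space (measure_pmf srw_step_pmf)"

definition walk :: "int ^ 'd \<Rightarrow> (int ^ 'd) stream \<Rightarrow> nat \<Rightarrow> int ^ 'd" where
  "walk x \<omega> t = x + (\<Sum>k<t. \<omega> !! k)"

definition hit_time :: "(int ^ 'd) set \<Rightarrow> int ^ 'd \<Rightarrow> (int ^ 'd) stream \<Rightarrow> enat" where
  "hit_time A x \<omega> = (if \<exists>t. walk x \<omega> t \<in> A then enat (LEAST t. walk x \<omega> t \<in> A) else \<infinity>)"

end

theory Submission
  imports Defs
begin

primrec EE :: "(int^'d::finite) set \<Rightarrow> (int^'d) set \<Rightarrow> nat \<Rightarrow> int^'d \<Rightarrow> (int^'d) stream set" where
  "EE P Q 0 y = (if y \<notin> P \<and> y \<in> Q then UNIV else {})"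
| "EE P Q (Suc m) y = (if y \<in> P then {} else if y \<in> Q then UNIV else {\<omega>. stl \<omega> \<in> EE P Q m (y + shd \<omega>)})"

lemma walk_0[simp]: "walk y \<omega> 0 = y" by (simp add: walk_def)

lemma walk_Suc: "walk y \<omega> (Suc t) = walk (y + shd \<omega>) (stl \<omega>) t"
  unfolding walk_def sum.lessThan_Suc_shift by (simp add: add.assoc)

lemma EE_char: "\<omega> \<in> EE P Q m y \<longleftrightarrow> (\<exists>t\<le>m. walk y \<omega> t \<in> Q \<and> (\<forall>t'\<le>t. walk y \<omega> t' \<notin> P))"
proof (induction m arbitrary: y \<omega>)
  case 0
  then show ?case by auto
next
  case (Suc m)
  show ?case
  proof (cases "y \<in> P")
    case True
    then show ?thesis by auto
  next
    case nP: False
    show ?thesis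
    proof (cases "y \<in> Q")
      case True
      then show ?thesis using nP by (auto intro!: exI[of _ 0])
    next
      case nQ: False
      have "(\<exists>t\<le>Suc m. walk y \<omega> t \<in> Q \<and> (\<forall>t'\<le>t. walk y \<omega> t' \<notin> P)) \<longleftrightarrow>
            (\<exists>t\<le>m. walk (y + shd \<omega>) (stl \<omega>) t \<in> Q \<and> (\<forall>t'\<le>t. walk (y + shd \<omega>) (stl \<omega>) t' \<notin> P))"
      proof
        assume "\<exists>t\<le>Suc m. walk y \<omega> t \<in> Q \<and> (\<forall>t'\<le>t. walk y \<omega> t' \<notin> P)"
        then obtain t where t: "t \<le> Suc m" "walk y \<omega> t \<in> Q" "\<forall>t'\<le>t. walk y \<omega> t' \<notin> P" by blast
        then obtain t0 where t0: "t = Suc t0" using nQ by (cases t) auto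
        show "\<exists>t\<le>m. walk (y + shd \<omega>) (stl \<omega>) t \<in> Q \<and> (\<forall>t'\<le>t. walk (y + shd \<omega>) (stl \<omega>) t' \<notin> P)"
        proof (intro exI[of _ t0] conjI allI impI)
          show "t0 \<le> m" using t t0 by simp
          show "walk (y + shd \<omega>) (stl \<omega>) t0 \<in> Q" using t t0 by (simp add: walk_Suc)
          fix t' assume "t' \<le> t0"
          then show "walk (y + shd \<omega>) (stl \<omega>) t' \<notin> P" using t(3) t0 walk_Suc[of y \<omega> t']
            by (metis Suc_le_mono)
        qed
      next
        assume "\<exists>t\<le>m. walk (y + shd \<omega>) (stl \<omega>) t \<in> Q \<and> (\<forall>t'\<le>t. walk (y + shd \<omega>) (stl \<omega>) t' \<notin> P)"
        then obtain t where t: "t \<le> m" "walk (y + shd \<omega>) (stl \<omega>) t \<in> Q" "\<forall>t'\<le>t. walk (y + shd \<omega>) (stl \<omega>) t' \<notin> P" by blast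
        show "\<exists>t\<le>Suc m. walk y \<omega> t \<in> Q \<and> (\<forall>t'\<le>t. walk y \<omega> t' \<notin> P)"
        proof (intro exI[of _ "Suc t"] conjI allI impI)
          show "Suc t \<le> Suc m" using t by simp
          show "walk y \<omega> (Suc t) \<in> Q" using t by (simp add: walk_Suc)
          fix t' assume "t' \<le> Suc t"
          then show "walk y \<omega> t' \<notin> P" using t(3) nP
            by (cases t') (auto simp: walk_Suc)
        qed
      qed
      then show ?thesis using nP nQ Suc.IH by simp
    qed
  qed
qed

lemma hit_less_iff:
  "hit_time Q x \<omega> < hit_time P x \<omega> \<longleftrightarrow> (\<exists>t. walk x \<omega> t \<in> Q \<and> (\<forall>t'\<le>t. walk x \<omega> t' \<notin> P))"
proof
  assume h: "hit_time Q x \<omega> < hit_time P x \<omega>"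
  then have ex: "\<exists>t. walk x \<omega> t \<in> Q" unfolding hit_time_def by (auto split: if_splits)
  define t0 where "t0 = (LEAST t. walk x \<omega> t \<in> Q)"
  have t0: "walk x \<omega> t0 \<in> Q" using ex unfolding t0_def by (metis LeastI)
  have hq: "hit_time Q x \<omega> = enat t0" using ex unfolding hit_time_def t0_def by simp
  show "\<exists>t. walk x \<omega> t \<in> Q \<and> (\<forall>t'\<le>t. walk x \<omega> t' \<notin> P)"
  proof (intro exI[of _ t0] conjI allI impI notI)
    show "walk x \<omega> t0 \<in> Q" by (rule t0)
    fix t' assume "t' \<le> t0" "walk x \<omega> t' \<in> P"
    then have "hit_time P x \<omega> \<le> enat t'" unfolding hit_time_def
      by (auto intro: Least_le)
    then show False using h hq \<open>t' \<le> t0\<close> by (metis enat_ord_simps(1) leD order.strict_trans2)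
  qed
next
  assume "\<exists>t. walk x \<omega> t \<in> Q \<and> (\<forall>t'\<le>t. walk x \<omega> t' \<notin> P)"
  then obtain t where t: "walk x \<omega> t \<in> Q" "\<forall>t'\<le>t. walk x \<omega> t' \<notin> P" by blast
  have hq: "hit_time Q x \<omega> \<le> enat t" unfolding hit_time_def using t by (auto intro: Least_le)
  have "enat t < hit_time P x \<omega>"
  proof (cases "\<exists>s. walk x \<omega> s \<in> P")
    case True
    define t1 where "t1 = (LEAST s. walk x \<omega> s \<in> P)"
    have "walk x \<omega> t1 \<in> P" using True unfolding t1_def by (metis LeastI)
    then have "t < t1" using t(2) by (meson not_le)
    then show ?thesis using True unfolding hit_time_def t1_def by simp
  next
    case False
    then show ?thesis unfolding hit_time_def by simp
  qed
  then show "hit_time Q x \<omega> < hit_time P x \<omega>" using hq by (meson order.strict_trans1)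
qed

lemma space_srw[simp]: "space srw_space = UNIV"
  by (simp add: srw_space_def space_stream_space)

lemma UNIV_sets_srw: "UNIV \<in> sets (srw_space :: (int^'d::finite) stream measure)"
  by (metis sets.top space_srw)

lemma sets_EE: "EE P Q m y \<in> sets srw_space"
proof (induction m arbitrary: y)
  case 0
  show ?case using UNIV_sets_srw[where 'd='a] by simp
next
  case (Suc m)
  have "{\<omega>. stl \<omega> \<in> EE P Q m (y + shd \<omega>)} \<in> sets srw_space"
  proof -
    have "(\<lambda>\<omega>. indicator (EE P Q m (y + shd \<omega>)) (stl \<omega>) :: real) \<in> borel_measurable srw_space"
    proof (rule measurable_compose_countable[where f="\<lambda>s \<omega>. indicator (EE P Q m (y + s)) (stl \<omega>)" and g=shd])
      fix s :: "int^'a"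
      show "(\<lambda>\<omega>. indicator (EE P Q m (y + s)) (stl \<omega>) :: real) \<in> borel_measurable srw_space"
        using Suc.IH unfolding srw_space_def
        by (intro borel_measurable_indicator' measurable_stl) auto
    next
      show "shd \<in> measurable srw_space (count_space UNIV)"
        unfolding srw_space_def
        using measurable_shd[of "measure_pmf srw_step_pmf"]
          measurable_cong_sets[of "stream_space (measure_pmf srw_step_pmf)" "stream_space (measure_pmf srw_step_pmf)" "measure_pmf srw_step_pmf" "count_space UNIV"]
        by simp
    qed
    then have "{\<omega> \<in> space srw_space. indicator (EE P Q m (y + shd \<omega>)) (stl \<omega>) = (1::real)} \<in> sets srw_space"
      by measurable
    moreover have "{\<omega> \<in> space srw_space. indicator (EE P Q m (y + shd \<omega>)) (stl \<omega>) = (1::real)} = {\<omega>. stl \<omega> \<in> EE P Q m (y + shd \<omega>)}"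
      by (auto simp: indicator_def)
    ultimately show ?thesis by simp
  qed
  then show ?case using UNIV_sets_srw[where 'd='a] by simp
qed

definition ev :: "'d::finite \<Rightarrow> int \<Rightarrow> int^'d" where
  "ev i s = (\<chi> j. if j = i then s else 0)"

lemma steps_eq: "srw_steps = (\<lambda>(i,s). ev i s) ` (UNIV \<times> {1,-1})"
  unfolding srw_steps_def ev_def by auto

lemma inj_ev: "inj_on (\<lambda>(i,s). ev i s) (UNIV \<times> {1::int,-1})"
proof (rule inj_onI, clarify)
  fix i s i' s' assume h: "ev i s = ev i' s'" "s \<in> {1::int,-1}" "s' \<in> {1::int,-1}"
  then have "ev i s $ i = ev i' s' $ i" by simp
  then have "s = (if i = i' then s' else 0)" unfolding ev_def by simp
  with h(2) have ii: "i = i'" by (auto split: if_splits)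
  with \<open>s = _\<close> show "i = i' \<and> s = s'" by simp
qed

lemma finite_steps: "finite (srw_steps :: (int^'d::finite) set)"
  unfolding steps_eq by simp

lemma card_steps: "card (srw_steps :: (int^'d::finite) set) = 2 * CARD('d)"
  unfolding steps_eq by (simp add: card_image[OF inj_ev] card_cartesian_product)

lemma steps_ne: "(srw_steps :: (int^'d::finite) set) \<noteq> {}"
  unfolding steps_eq by simp

lemma sum_steps: "(\<Sum>z\<in>(srw_steps :: (int^'d::finite) set). f z) = (\<Sum>i\<in>UNIV. f (ev i 1) + f (ev i (-1)))"
proof -
  have "(\<Sum>z\<in>(srw_steps :: (int^'d::finite) set). f z) = (\<Sum>p\<in>UNIV \<times> {1::int,-1}. f (case p of (i,s) \<Rightarrow> ev i s))"
    unfolding steps_eq by (subst sum.reindex[OF inj_ev]) (simp add: o_def)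
  also have "\<dots> = (\<Sum>(i,s)\<in>UNIV \<times> {1::int,-1}. f (ev i s))"
    by (rule sum.cong) auto
  also have "\<dots> = (\<Sum>i\<in>UNIV. \<Sum>s\<in>{1::int,-1}. f (ev i s))"
    by (rule sum.cartesian_product[symmetric])
  also have "\<dots> = (\<Sum>i\<in>UNIV. f (ev i 1) + f (ev i (-1)))" by simp
  finally show ?thesis .
qed

lemma lat_add: "lat_to_real (y + z) = lat_to_real y + lat_to_real z"
  unfolding lat_to_real_def by (simp add: vec_eq_iff)

lemma lat_ev_inner: "lat_to_real (ev i s) \<bullet> v = real_of_int s * v $ i"
  unfolding lat_to_real_def ev_def inner_vec_def
  by (simp add: if_distrib[of real_of_int] if_distrib[of "\<lambda>x. x * _"] cong: if_cong)

lemma inner_add_step: "lat_to_real (y + ev i s) \<bullet> v = lat_to_real y \<bullet> v + real_of_int s * v $ i"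
  by (simp add: lat_add inner_add_left lat_ev_inner)

lemma sum_sq_unit: "norm (v::real^'d::finite) = 1 \<Longrightarrow> (\<Sum>i\<in>UNIV. (v $ i)^2) = 1"
  using dot_square_norm[of v] by (simp add: inner_vec_def power2_eq_square)

lemma step_inner_le: "norm (v::real^'d::finite) = 1 \<Longrightarrow> z \<in> srw_steps \<Longrightarrow> \<bar>lat_to_real z \<bullet> v\<bar> \<le> 1"
  unfolding steps_eq using component_le_norm_cart[of v]
  by (auto simp: lat_ev_inner)

lemma key_identity:
  fixes A W a c L h :: real
  defines "G \<equiv> \<lambda>A W. A / L + (W^2 + A * (L + 1 - A)) / h^2"
  shows "G (A - a) (W + c) + G (A + a) (W - c) = 2 * G A W + 2 * (c^2 - a^2) / h^2"
  unfolding G_def by (simp add: field_simps power2_eq_square) (simp add: algebra_simps add_divide_distrib[symmetric])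
lemma harmonic:
  fixes v1 v2 :: "real^'d::finite" and L h c1 c2 :: real
  assumes n1: "norm v1 = 1" and n2: "norm v2 = 1"
  defines "F \<equiv> \<lambda>y. (c1 - lat_to_real y \<bullet> v1) / L + ((lat_to_real y \<bullet> v2 - c2)^2
        + (c1 - lat_to_real y \<bullet> v1) * (L + 1 - (c1 - lat_to_real y \<bullet> v1))) / h^2"
  shows "(\<Sum>z\<in>srw_steps. F (y + z)) = 2 * real CARD('d) * F y"
proof -
  define G where "G \<equiv> \<lambda>A W::real. A / L + (W^2 + A * (L + 1 - A)) / h^2"
  define A where "A = c1 - lat_to_real y \<bullet> v1"
  define W where "W = lat_to_real y \<bullet> v2 - c2"
  have Fy: "F y = G A W" unfolding F_def G_def A_def W_def by simp
  have trm: "F (y + ev i 1) + F (y + ev i (-1)) = 2 * F y + 2 * ((v2$i)^2 - (v1$i)^2) / h^2" for i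
  proof -
    have "F (y + ev i 1) + F (y + ev i (-1)) = G (A - v1$i) (W + v2$i) + G (A + v1$i) (W - v2$i)"
      unfolding F_def G_def A_def W_def inner_add_step by (simp add: algebra_simps)
    also have "\<dots> = 2 * G A W + 2 * ((v2$i)^2 - (v1$i)^2) / h^2"
      unfolding G_def by (rule key_identity)
    finally show ?thesis using Fy by simp
  qed
  have "(\<Sum>z\<in>srw_steps. F (y + z)) = (\<Sum>i\<in>UNIV. 2 * F y + 2 * ((v2$i)^2 - (v1$i)^2) / h^2)"
    by (simp add: sum_steps trm)
  also have "\<dots> = 2 * real CARD('d) * F y + 2 * ((\<Sum>i\<in>UNIV. (v2$i)^2) - (\<Sum>i\<in>UNIV. (v1$i)^2)) / h^2"
    by (simp add: sum.distrib sum_divide_distrib[symmetric] sum_distrib_left[symmetric] sum_subtractf)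
  also have "\<dots> = 2 * real CARD('d) * F y"
    using sum_sq_unit[OF n1] sum_sq_unit[OF n2] by simp
  finally show ?thesis .
qed

lemma recursion:
  fixes y :: "int^'d::finite"
  assumes "y \<notin> P" "y \<notin> Q"
  shows "emeasure srw_space (EE P Q (Suc m) y) =
    (\<Sum>z\<in>srw_steps. emeasure srw_space (EE P Q m (y + z))) / card (srw_steps :: (int^'d) set)"
proof -
  have "EE P Q (Suc m) y = {\<omega>. stl \<omega> \<in> EE P Q m (y + shd \<omega>)}" using assms by simp
  then have "emeasure srw_space (EE P Q (Suc m) y) =
     (\<integral>\<^sup>+t. emeasure srw_space {x\<in>space srw_space. t ## x \<in> EE P Q (Suc m) y} \<partial>measure_pmf srw_step_pmf)"
    unfolding srw_space_def
    by (intro prob_space.emeasure_stream_space prob_space_measure_pmf sets_EE[unfolded srw_space_def])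
  also have "\<dots> = (\<integral>\<^sup>+t. emeasure srw_space (EE P Q m (y + t)) \<partial>measure_pmf srw_step_pmf)"
    using assms by simp
  also have "\<dots> = (\<Sum>z\<in>srw_steps. emeasure srw_space (EE P Q m (y + z))) / card (srw_steps :: (int^'d) set)"
    unfolding srw_step_pmf_def by (simp add: nn_integral_pmf_of_set steps_ne finite_steps)
  finally show ?thesis .
qed
lemma prob_srw: "prob_space (srw_space :: (int^'d::finite) stream measure)"
  unfolding srw_space_def by (rule prob_space.prob_space_stream_space[OF prob_space_measure_pmf])

theorem lemma5p4:
  fixes v1 v2 :: "real ^ 'd::finite" and b1 b2 :: real and x :: "int ^ 'd"
  assumes "CARD('d) \<ge> 2"
    and "norm v1 = 1" and "norm v2 = 1"
    and "x \<notin> halfspace v1 b1" and "x \<notin> halfspace v2 b2"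
  defines "h1 \<equiv> b1 - lat_to_real x \<bullet> v1" and "h2 \<equiv> b2 - lat_to_real x \<bullet> v2"
  shows "measure srw_space
           {\<omega> \<in> space srw_space. hit_time (halfspace v2 b2) x \<omega> < hit_time (halfspace v1 b1) x \<omega>}
         \<le> 5/2 * ((h1 + 1) / h2) * (1 + 1 / (2 * h2))^2"
proof -
  define H1 where "H1 = halfspace v1 b1"
  define H2 where "H2 = halfspace v2 b2"
  have h1pos: "h1 > 0" using assms(4) unfolding h1_def halfspace_def by simp
  have h2pos: "h2 > 0" using assms(5) unfolding h2_def halfspace_def by simp
  define L where "L = h2"
  have Lpos: "L > 0" using h2pos L_def by simp
  define A where "A y = b1 + 1 - lat_to_real y \<bullet> v1" for y
  define W where "W y = lat_to_real y \<bullet> v2 - lat_to_real x \<bullet> v2" for y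
  define F where "F \<equiv> \<lambda>y. (b1 + 1 - lat_to_real y \<bullet> v1) / L + ((lat_to_real y \<bullet> v2 - lat_to_real x \<bullet> v2)^2
        + (b1 + 1 - lat_to_real y \<bullet> v1) * (L + 1 - (b1 + 1 - lat_to_real y \<bullet> v1))) / h2^2"
  have F_eq: "F y = A y / L + ((W y)^2 + A y * (L + 1 - A y)) / h2^2" for y
    unfolding F_def A_def W_def by simp
  define G where "G y = (if y \<in> H1 then 0 else if y \<in> H2 then 1 else if A y \<ge> L then 1 else min 1 (F y))" for y
  have harm: "(\<Sum>z\<in>srw_steps. F (y + z)) = 2 * real CARD('d) * F y" for y
    unfolding F_def by (rule harmonic[OF assms(2,3)])
  have inH1: "y \<in> H1 \<longleftrightarrow> A y \<le> 1" for y by (auto simp: A_def H1_def halfspace_def)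
  have inH2: "y \<in> H2 \<longleftrightarrow> W y \<ge> h2" for y by (auto simp: W_def H2_def h2_def halfspace_def)
  have Fpos: "0 \<le> F y" if "y \<notin> H1" "A y < L" for y
  proof -
    have "A y > 1" using that inH1 by force
    then show ?thesis using F_eq[of y] Lpos that
      by (auto intro!: add_nonneg_nonneg divide_nonneg_nonneg mult_nonneg_nonneg)
  qed
  have G01: "0 \<le> G y" "G y \<le> 1" for y using Fpos[of y] unfolding G_def by auto
  have nbr: "G (y + z) \<le> F (y + z) \<and> 0 \<le> F (y + z)" if y: "y \<notin> H1" "A y < L" and z: "z \<in> srw_steps" for y z
  proof -
    have az: "\<bar>lat_to_real z \<bullet> v1\<bar> \<le> 1" by (rule step_inner_le[OF assms(2) z])
    have Ayz: "A (y + z) = A y - lat_to_real z \<bullet> v1" unfolding A_def by (simp add: lat_add inner_add_left)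
    have Ay: "A y > 1" using y inH1 by force
    have P0: "A (y + z) > 0" "A (y + z) < L + 1" using Ayz Ay y(2) az by auto
    have t1: "0 \<le> A (y + z) / L" using P0 Lpos by simp
    have t2: "0 \<le> ((W (y + z))^2 + A (y + z) * (L + 1 - A (y + z))) / h2^2" using P0 by simp
    have Fnn: "0 \<le> F (y + z)" using t1 t2 F_eq by simp
    have "G (y + z) \<le> F (y + z)"
    proof (cases "y + z \<in> H1")
      case True then show ?thesis using Fnn G_def by simp
    next
      case nH1: False
      show ?thesis
      proof (cases "y + z \<in> H2")
        case True
        then have "W (y + z) \<ge> h2" using inH2 by simp
        then have "(W (y + z))^2 \<ge> h2^2" using h2pos by (simp add: power_mono)
        then have "((W (y + z))^2 + A (y + z) * (L + 1 - A (y + z))) / h2^2 \<ge> 1"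
        proof -
          have "0 \<le> A (y + z) * (L + 1 - A (y + z))" using P0 by simp
          then show ?thesis using \<open>(W (y + z))^2 \<ge> h2^2\<close> h2pos by (simp add: le_divide_eq)
        qed
        then have "F (y + z) \<ge> 1" using t1 F_eq[of "y+z"] by linarith
        then show ?thesis using True nH1 G_def by simp
      next
        case nH2: False
        show ?thesis
        proof (cases "A (y + z) \<ge> L")
          case True
          then have "A (y + z) / L \<ge> 1" using Lpos by simp
          then have "F (y + z) \<ge> 1" using t2 F_eq[of "y+z"] by linarith
          then show ?thesis using True nH1 nH2 G_def by simp
        qed (use nH1 nH2 G_def in simp)
      qed
    qed
    then show ?thesis using Fnn by simp
  qed
  interpret S: prob_space "srw_space :: (int^'d) stream measure" by (rule prob_srw)
  have cardpos: "real (card (srw_steps :: (int^'d) set)) > 0"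
    using card_steps[where 'd='d] by simp
  have bound: "emeasure srw_space (EE H1 H2 m y) \<le> ennreal (G y)" for m y
  proof (induction m arbitrary: y)
    case 0
    show ?case
    proof (cases "y \<notin> H1 \<and> y \<in> H2")
      case True
      then have "G y = 1" using G_def by simp
      then show ?thesis using S.emeasure_le_1 by simp
    qed auto
  next
    case (Suc m)
    show ?case
    proof (cases "y \<in> H1 \<or> y \<in> H2 \<or> A y \<ge> L")
      case True
      show ?thesis
      proof (cases "y \<in> H1")
        case True then show ?thesis by simp
      next
        case False
        then have "G y = 1" using True G_def by auto
        then show ?thesis using S.emeasure_le_1 by simp
      qed
    next
      case False
      then have y: "y \<notin> H1" "y \<notin> H2" "A y < L" by auto
      have "emeasure srw_space (EE H1 H2 (Suc m) y) =
          (\<Sum>z\<in>srw_steps. emeasure srw_space (EE H1 H2 m (y + z))) / card (srw_steps :: (int^'d) set)"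
        by (rule recursion[OF y(1,2)])
      also have "\<dots> \<le> (\<Sum>z\<in>srw_steps. ennreal (F (y + z))) / card (srw_steps :: (int^'d) set)"
      proof (intro divide_right_mono_ennreal sum_mono)
        fix z :: "int^'d" assume z: "z \<in> srw_steps"
        have "emeasure srw_space (EE H1 H2 m (y + z)) \<le> ennreal (G (y + z))" by (rule Suc.IH)
        also have "\<dots> \<le> ennreal (F (y + z))" using nbr[OF y(1,3) z] by (simp add: ennreal_leI)
        finally show "emeasure srw_space (EE H1 H2 m (y + z)) \<le> ennreal (F (y + z))" .
      qed
      also have "\<dots> = ennreal (\<Sum>z\<in>srw_steps. F (y + z)) / ennreal (real (card (srw_steps :: (int^'d) set)))"
        using nbr[OF y(1,3)] by (simp add: sum_ennreal ennreal_of_nat_eq_real_of_nat)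
      also have "\<dots> = ennreal ((\<Sum>z\<in>srw_steps. F (y + z)) / real (card (srw_steps :: (int^'d) set)))"
        using cardpos nbr[OF y(1,3)] by (intro divide_ennreal) (auto intro: sum_nonneg)
      also have "\<dots> = ennreal (F y)"
        using harm[of y] card_steps[where 'd='d] by simp
      finally have le1: "emeasure srw_space (EE H1 H2 (Suc m) y) \<le> ennreal (F y)" .
      have le2: "emeasure srw_space (EE H1 H2 (Suc m) y) \<le> 1" by (rule S.emeasure_le_1)
      have "G y = min 1 (F y)" using y G_def by simp
      then show ?thesis using le1 le2 by (cases "F y \<le> 1") (auto simp: min_def)
    qed
  qed
  define Ev where "Ev = {\<omega> \<in> space srw_space. hit_time H2 x \<omega> < hit_time H1 x \<omega>}"
  have Ev_eq: "Ev = (\<Union>m. EE H1 H2 m x)"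
    unfolding Ev_def by (auto simp: hit_less_iff EE_char) blast
  have inc: "incseq (\<lambda>m. EE H1 H2 m x)"
  proof (rule incseq_SucI, rule subsetI)
    fix m \<omega> assume "\<omega> \<in> EE H1 H2 m x"
    then have "\<exists>t\<le>m. walk x \<omega> t \<in> H2 \<and> (\<forall>t'\<le>t. walk x \<omega> t' \<notin> H1)" by (simp only: EE_char)
    then have "\<exists>t\<le>Suc m. walk x \<omega> t \<in> H2 \<and> (\<forall>t'\<le>t. walk x \<omega> t' \<notin> H1)" using le_SucI by blast
    then show "\<omega> \<in> EE H1 H2 (Suc m) x" by (simp only: EE_char)
  qed
  have "emeasure srw_space Ev = (SUP m. emeasure srw_space (EE H1 H2 m x))"
    unfolding Ev_eq by (rule SUP_emeasure_incseq[symmetric]) (auto simp: sets_EE inc)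
  also have "\<dots> \<le> ennreal (G x)" by (rule SUP_least) (rule bound)
  finally have "ennreal (measure srw_space Ev) \<le> ennreal (G x)" by (simp add: S.emeasure_eq_measure)
  then have mEv: "measure srw_space Ev \<le> G x" using G01 by (simp add: ennreal_le_iff)
  have xn: "x \<notin> H1" "x \<notin> H2" using assms(4,5) H1_def H2_def by auto
  have Ax: "A x = h1 + 1" unfolding A_def h1_def by simp
  have Wx: "W x = 0" unfolding W_def by simp
  have Fx: "F x = (h1 + 1) / h2 + (h1 + 1) * (h2 - h1) / h2^2"
    using F_eq[of x] Ax Wx L_def by (simp add: algebra_simps)
  have "(h1 + 1) * (h2 - h1) / h2^2 \<le> (h1 + 1) * h2 / h2^2"
    using h1pos h2pos by (intro divide_right_mono mult_left_mono) auto
  also have "\<dots> = (h1 + 1) / h2" using h2pos by (simp add: power2_eq_square)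
  finally have F2: "F x \<le> 2 * ((h1 + 1) / h2)" using Fx by linarith
  have sq1: "1 \<le> (1 + 1 / (2 * h2))^2" using h2pos by (simp add: one_le_power)
  have GF: "G x \<le> 2 * ((h1 + 1) / h2)"
  proof (cases "A x \<ge> L")
    case True
    then have "h1 + 1 \<ge> h2" using Ax L_def by simp
    then have "1 \<le> (h1 + 1) / h2" using h2pos by simp
    then show ?thesis using G01(2)[of x] by linarith
  next
    case False
    then have "G x \<le> F x" unfolding G_def using xn by simp
    then show ?thesis using F2 by simp
  qed
  have "G x \<le> 2 * ((h1 + 1) / h2)" by (rule GF)
  also have "\<dots> \<le> 5/2 * ((h1 + 1) / h2)"
  proof -
    have "0 \<le> (h1 + 1) / h2" using h1pos h2pos by simp
    then show ?thesis by linarith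
  qed
  also have "\<dots> \<le> 5/2 * ((h1 + 1) / h2) * (1 + 1 / (2 * h2))^2"
  proof -
    note sq1
    moreover have "0 \<le> 5/2 * ((h1 + 1) / h2)" using h1pos h2pos by simp
    ultimately show ?thesis by (metis mult_left_mono mult.right_neutral)
  qed
  finally show ?thesis using mEv unfolding Ev_def H1_def H2_def by simp
qed

end
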